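(* In every execution of the Minimmit protocol (described in the context), correct processors vote for at most one block in each view: if $p_i$ is correct then, for each $v\in \mathbb{N}_{\geq 1}$, there exists at most one block $b$ with $b.\text{view}=v$ such that $p_i$ sends a message $(\text{vote},b)$.
   Context: Setting. There are $n$ processors $\Pi=\{p_0,\dots,p_{n-1}\}$ and an integer $f$ with $5f+1\le n$. At most $f$ processors may be corrupted by an adversary during the execution and then behave arbitrarily (Byzantine); processors never corrupted are called correct. Processors communicate over point-to-point authenticated channels; every message is signed by its sender; a PKI validates signatures and $H$ is a collision-resistant hash function; attention is restricted to executions in which the adversary cannot forge signatures or find hash collisions. Time is divided into timeslots $t\in\mathbb{N}_{\ge 0}$ (partial synchrony): a message sent at time $t$ arrives at some time $t'>t$ with $t'\le \max\{\text{GST},t\}+\Delta$, where $\Delta$ is known to the protocol and GST is unknown and chosen by the adversary (who also chooses delivery times subject to this constraint). Clocks of correct processors advance in real time. When a correct processor sends a message to all processors, it regards that message as immediately received by itself. Transactions are unique messages signed by the environment; each timeslot each processor may receive a finite set of transactions. Each processor $p_i$ maintains an append-only log $\text{log}_i$ of distinct transactions, $\text{log}_i(t)$ denoting its value at the end of timeslot $t$. Blocks. $\text{lead}(v):=p_j$ with $j=v \bmod n$. The genesis block is $b_{\text{gen}}=(0,\lambda,\lambda)$ ($\lambda$ the empty sequence). Any other block is a tuple $b=(v,\text{Tr},h)$ signed by $\text{lead}(v)$, with $v\in\mathbb{N}_{\ge1}$ ($b.\text{view}=v$, "a view $v$ block"), $\text{Tr}=b.\text{Tr}$ a sequence of distinct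 transactions, and $h=b.h$ a hash value; its parent is the block $b'$ with $H(b')=h$. The ancestors of $b$ are $b$ and the ancestors of its parent ($b_{\text{gen}}$ has only itself). Two blocks are inconsistent if neither is an ancestor of the other. To finalise $b$ means: upon obtaining all ancestors of $b$, the processor sets its log to extend the concatenation of $b'.\text{Tr}$ over ancestors $b'$ of $b$ (with duplicates removed). Messages. A vote for $b$ is $(\text{vote},b)$. An M-notarization for $b$ is a set of $2f+1$ votes for $b$ signed by distinct processors; an L-notarization for $b$ is a set of $n-f$ votes for $b$ signed by distinct processors. A nullify$(v)$ message is $(\text{nullify},v)$; a nullification for view $v$ is a set of $2f+1$ nullify$(v)$ messages signed by distinct processors. Local state of each processor: $\mathtt{S}$, the set of all received messages (automatically updated; it contains a block $b$ if it contains any message having $b$ as an entry; initially it contains only $b_{\text{gen}}$ and an M- and L-notarization for $b_{\text{gen}}$); the current view $\mathtt{v}$ (initially 1; a processor enters view $v$ when $\mathtt{v}$ becomes $v$); a timer $\mathtt{T}$ (initially 0, increasing in real time, reset to 0 upon entering a new view); $\mathtt{nullified}$ (initially false) and $\mathtt{notarized}$ (initially $\bot$, a value different from every block). SelectParent$(\mathtt{S},\mathtt{v})$: let $v'<\mathtt{v}$ be greatest such that $\mathtt{S}$ contains an M-notarization for some block of view $v'$; output the lexicographically least such block. ProposeChild$(b,v)$: form a sequence Tr of distinct transactions containing all transactions received and not in $b'.\text{Tr}$ for any ancestor $b'\in\mathtt{S}$ of $b$, and send the block $(v,\text{Tr},H(b))$ to all processors. $\mathtt{S}$ contains a valid proposal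 $b$ for view $v$ if $\mathtt{S}$ contains (i) precisely one block of the form $b=(v,\text{Tr},h)$ signed by $\text{lead}(v)$, (ii) an M-notarization for some $b'$ with $H(b')=h$, say $b'.\text{view}=v'$, and (iii) a nullification for each view in the open interval $(v',v)$. At timeslot $t$ a nullification $N\subseteq\mathtt{S}$ for a view $v$ is new if $\mathtt{S}$ contained no nullification for $v$ at any earlier timeslot and $N$ is lexicographically least among nullifications for $v$ in $\mathtt{S}$; new M-notarizations and new L-notarizations for a block $b$ are defined analogously. Protocol (Minimmit): at every timeslot, correct $p_i$ does, in order: (1) send new nullifications in $\mathtt{S}$ to all processors; (2) send new M- and L-notarizations in $\mathtt{S}$ to all; (3) if $p_i=\text{lead}(\mathtt{v})$, execute ProposeChild(SelectParent$(\mathtt{S},\mathtt{v}),\mathtt{v})$; (4) if $\mathtt{S}$ contains a valid proposal $b$ for view $\mathtt{v}$ and $\mathtt{notarized}=\bot$ and $\mathtt{nullified}=$ false, set $\mathtt{notarized}:=b$ and send $(\text{vote},b)$ to all; (5) if $\mathtt{T}=2\Delta$, $\mathtt{nullified}=$ false and $\mathtt{notarized}=\bot$, set $\mathtt{nullified}:=$ true and send $(\text{nullify},\mathtt{v})$ to all; (6) if $\mathtt{S}$ contains a nullification for $\mathtt{v}$, set $\mathtt{v}:=\mathtt{v}+1$, $\mathtt{nullified}:=$ false, $\mathtt{notarized}:=\bot$; (7) if $\mathtt{S}$ contains an M-notarization for some $b$ with $b.\text{view}=\mathtt{v}$: if $\mathtt{notarized}=\bot$ and $\mathtt{nullified}=$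 false send $(\text{vote},b)$ to all; then set $\mathtt{v}:=\mathtt{v}+1$, $\mathtt{nullified}:=$ false, $\mathtt{notarized}:=\bot$; (8) if $\mathtt{nullified}=$ false, $\mathtt{notarized}\neq\bot$, and $\mathtt{S}$ contains at least $2f+1$ messages signed by distinct processors, each either $(\text{nullify},\mathtt{v})$ or $(\text{vote},b)$ for some $b$ with $b.\text{view}=\mathtt{v}$ and $b\ne\mathtt{notarized}$, then set $\mathtt{nullified}:=$ true and send $(\text{nullify},\mathtt{v})$ to all; (9) if $\mathtt{S}$ contains a new L-notarization for a block $b$, finalise $b$. *)

theory Defs
  imports Main
begin

text \<open>Processors are indices p < n. Blocks (v, Tr, h); the parent hash of the genesis
block is the empty sequence, modelled as None. A block of view v is (implicitly) signed
by lead(v).\<close>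

datatype ('tx,'h) block = Block (bview: nat) (btrs: "'tx list") (bpar: "'h option")

definition gen :: "('tx,'h) block" where
  "gen = Block 0 [] None"

definition is_block :: "('tx,'h) block \<Rightarrow> bool" where
  "is_block b \<longleftrightarrow> b = gen \<or> (bview b \<ge> 1 \<and> distinct (btrs b) \<and> bpar b \<noteq> None)"

text \<open>Atomic signed messages: a block proposal (signed by lead of its view), a vote
(signer, block), a nullify message (signer, view), and a transaction (signed by the
environment). Notarizations/nullifications are sets of such atomic messages.\<close>

datatype ('tx,'h) smsg =
    SBlock "('tx,'h) block"
  | SVote nat "('tx,'h) block"
  | SNull nat nat
  | STx 'tx

definition lead :: "nat \<Rightarrow> nat \<Rightarrow> nat" where
  "lead n v = v mod n"

definition signed_by :: "nat \<Rightarrow> nat \<Rightarrow> ('tx,'h) smsg \<Rightarrow> bool" where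
  "signed_by n p m = (case m of
      SBlock b \<Rightarrow> bview b \<ge> 1 \<and> lead n (bview b) = p
    | SVote q _ \<Rightarrow> q = p
    | SNull q _ \<Rightarrow> q = p
    | STx _ \<Rightarrow> False)"

definition blocks_in :: "('tx,'h) smsg set \<Rightarrow> ('tx,'h) block set" where
  "blocks_in S = insert gen {b. is_block b \<and> (SBlock b \<in> S \<or> (\<exists>q. SVote q b \<in> S))}"

definition voters :: "nat \<Rightarrow> ('tx,'h) smsg set \<Rightarrow> ('tx,'h) block \<Rightarrow> nat set" where
  "voters n S b = {q. q < n \<and> SVote q b \<in> S}"

definition nullifiers :: "nat \<Rightarrow> ('tx,'h) smsg set \<Rightarrow> nat \<Rightarrow> nat set" where
  "nullifiers n S v = {q. q < n \<and> SNull q v \<in> S}"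

definition has_Mnot :: "nat \<Rightarrow> nat \<Rightarrow> ('tx,'h) smsg set \<Rightarrow> ('tx,'h) block \<Rightarrow> bool" where
  "has_Mnot n f S b \<longleftrightarrow> b = gen \<or> (is_block b \<and> card (voters n S b) \<ge> 2*f+1)"

definition has_Lnot :: "nat \<Rightarrow> nat \<Rightarrow> ('tx,'h) smsg set \<Rightarrow> ('tx,'h) block \<Rightarrow> bool" where
  "has_Lnot n f S b \<longleftrightarrow> b = gen \<or> (is_block b \<and> card (voters n S b) \<ge> n - f)"

definition has_null :: "nat \<Rightarrow> nat \<Rightarrow> ('tx,'h) smsg set \<Rightarrow> nat \<Rightarrow> bool" where
  "has_null n f S v \<longleftrightarrow> card (nullifiers n S v) \<ge> 2*f+1"

definition is_notarization :: "nat \<Rightarrow> nat \<Rightarrow> ('tx,'h) smsg set \<Rightarrow> ('tx,'h) block \<Rightarrow> ('tx,'h) smsg set \<Rightarrow> bool" where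
  "is_notarization n k S b N \<longleftrightarrow>
     (\<exists>Q. Q \<subseteq> voters n S b \<and> card Q = k \<and> N = (\<lambda>q. SVote q b) ` Q)"

definition is_nullification :: "nat \<Rightarrow> nat \<Rightarrow> ('tx,'h) smsg set \<Rightarrow> nat \<Rightarrow> ('tx,'h) smsg set \<Rightarrow> bool" where
  "is_nullification n f S v N \<longleftrightarrow>
     (\<exists>Q. Q \<subseteq> nullifiers n S v \<and> card Q = 2*f+1 \<and> N = (\<lambda>q. SNull q v) ` Q)"

inductive_set ancestors :: "(('tx,'h) block \<Rightarrow> 'h) \<Rightarrow> ('tx,'h) smsg set \<Rightarrow> ('tx,'h) block \<Rightarrow> ('tx,'h) block set"
  for H S b where
  self: "b \<in> ancestors H S b"
| parent: "c \<in> ancestors H S b \<Longrightarrow> c' \<in> blocks_in S \<Longrightarrow> bpar c = Some (H c') \<Longrightarrow> c' \<in> ancestors H S b"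

definition valid_proposal :: "nat \<Rightarrow> nat \<Rightarrow> (('tx,'h) block \<Rightarrow> 'h) \<Rightarrow> ('tx,'h) smsg set \<Rightarrow> nat \<Rightarrow> ('tx,'h) block \<Rightarrow> bool" where
  "valid_proposal n f H S v b \<longleftrightarrow>
     {c \<in> blocks_in S. bview c = v} = {b} \<and>
     (\<exists>b' \<in> blocks_in S. bpar b = Some (H b') \<and> has_Mnot n f S b' \<and>
        (\<forall>w. bview b' < w \<and> w < v \<longrightarrow> has_null n f S w))"

text \<open>Possible outputs of SelectParent(S, v) (lexicographic tie-breaking relaxed to any choice).\<close>
definition select_parent :: "nat \<Rightarrow> nat \<Rightarrow> ('tx,'h) smsg set \<Rightarrow> nat \<Rightarrow> ('tx,'h) block \<Rightarrow> bool" where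
  "select_parent n f S v par \<longleftrightarrow>
     par \<in> blocks_in S \<and> has_Mnot n f S par \<and> bview par < v \<and>
     (\<forall>c \<in> blocks_in S. has_Mnot n f S c \<and> bview c < v \<longrightarrow> bview c \<le> bview par)"

definition propose_child :: "(('tx,'h) block \<Rightarrow> 'h) \<Rightarrow> ('tx,'h) smsg set \<Rightarrow> ('tx,'h) block \<Rightarrow> nat \<Rightarrow> ('tx,'h) smsg set \<Rightarrow> bool" where
  "propose_child H S par v Out \<longleftrightarrow>
     (\<exists>Tr. distinct Tr \<and>
        {tx. STx tx \<in> S} - (\<Union>c \<in> ancestors H S par. set (btrs c)) \<subseteq> set Tr \<and>
        Out = {SBlock (Block v Tr (Some (H par)))})"

record ('tx,'h) pstate =
  cview :: nat
  tentry :: nat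
  nullified :: bool
  notarized :: "('tx,'h) block option"

definition init_state :: "('tx,'h) pstate" where
  "init_state = \<lparr>cview = 1, tentry = 0, nullified = False, notarized = None\<rparr>"

text \<open>One timeslot t of a correct processor p. Sprev: S at the end of timeslot t-1;
S0: S at the start of timeslot t (i.e. including messages arriving at t).
Messages sent during the timeslot are added to S immediately. The timer equals
t - tentry. Step (9) (finalisation) sends no messages and does not touch the
variables below, so it is omitted.\<close>
definition proto_step ::
  "nat \<Rightarrow> nat \<Rightarrow> nat \<Rightarrow> (('tx,'h) block \<Rightarrow> 'h) \<Rightarrow> nat \<Rightarrow> nat
   \<Rightarrow> ('tx,'h) smsg set \<Rightarrow> ('tx,'h) smsg set
   \<Rightarrow> ('tx,'h) pstate \<Rightarrow> ('tx,'h) pstate \<Rightarrow> ('tx,'h) smsg set \<Rightarrow> bool" where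
  "proto_step n f Delta H p t Sprev S0 st st' out \<longleftrightarrow>
   (\<exists>O1 O2 O3 O4 O5 O7 O8 st4 st5 st6 st7.
     \<comment> \<open>(1) forward new nullifications\<close>
     (\<exists>NF. O1 = \<Union>{NF w |w. has_null n f S0 w \<and> \<not> has_null n f Sprev w} \<and>
        (\<forall>w. has_null n f S0 w \<and> \<not> has_null n f Sprev w \<longrightarrow> is_nullification n f S0 w (NF w))) \<and>
     \<comment> \<open>(2) forward new M- and L-notarizations\<close>
     (\<exists>NM NL. O2 = \<Union>{NM b |b. has_Mnot n f S0 b \<and> \<not> has_Mnot n f Sprev b}
                 \<union> \<Union>{NL b |b. has_Lnot n f S0 b \<and> \<not> has_Lnot n f Sprev b} \<and>
        (\<forall>b. has_Mnot n f S0 b \<and> \<not> has_Mnot n f Sprev b \<longrightarrow> is_notarization n (2*f+1) S0 b (NM b)) \<and>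
        (\<forall>b. has_Lnot n f S0 b \<and> \<not> has_Lnot n f Sprev b \<longrightarrow> is_notarization n (n-f) S0 b (NL b))) \<and>
     \<comment> \<open>(3) leader proposes\<close>
     (if p = lead n (cview st)
      then (\<exists>par. select_parent n f (S0 \<union> O1 \<union> O2) (cview st) par \<and>
                  propose_child H (S0 \<union> O1 \<union> O2) par (cview st) O3)
      else O3 = {}) \<and>
     \<comment> \<open>(4) vote for a valid proposal\<close>
     (if (\<exists>b. valid_proposal n f H (S0 \<union> O1 \<union> O2 \<union> O3) (cview st) b)
          \<and> notarized st = None \<and> \<not> nullified st
      then (\<exists>b. valid_proposal n f H (S0 \<union> O1 \<union> O2 \<union> O3) (cview st) b \<and>
                st4 = st\<lparr>notarized := Some b\<rparr> \<and> O4 = {SVote p b})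
      else st4 = st \<and> O4 = {}) \<and>
     \<comment> \<open>(5) timeout\<close>
     (if t = tentry st4 + 2*Delta \<and> \<not> nullified st4 \<and> notarized st4 = None
      then st5 = st4\<lparr>nullified := True\<rparr> \<and> O5 = {SNull p (cview st4)}
      else st5 = st4 \<and> O5 = {}) \<and>
     \<comment> \<open>(6) nullification for the current view\<close>
     (if has_null n f (S0 \<union> O1 \<union> O2 \<union> O3 \<union> O4 \<union> O5) (cview st5)
      then st6 = \<lparr>cview = cview st5 + 1, tentry = t, nullified = False, notarized = None\<rparr>
      else st6 = st5) \<and>
     \<comment> \<open>(7) M-notarization for a block of the current view\<close>
     (if (\<exists>b. has_Mnot n f (S0 \<union> O1 \<union> O2 \<union> O3 \<union> O4 \<union> O5) b \<and> bview b = cview st6)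
      then (\<exists>b. has_Mnot n f (S0 \<union> O1 \<union> O2 \<union> O3 \<union> O4 \<union> O5) b \<and> bview b = cview st6 \<and>
               O7 = (if notarized st6 = None \<and> \<not> nullified st6 then {SVote p b} else {}) \<and>
               st7 = \<lparr>cview = cview st6 + 1, tentry = t, nullified = False, notarized = None\<rparr>)
      else st7 = st6 \<and> O7 = {}) \<and>
     \<comment> \<open>(8) nullify after conflicting evidence\<close>
     (if (\<exists>b0. \<not> nullified st7 \<and> notarized st7 = Some b0 \<and>
            card {q. q < n \<and> (SNull q (cview st7) \<in> S0 \<union> O1 \<union> O2 \<union> O3 \<union> O4 \<union> O5 \<union> O7 \<or>
                    (\<exists>b. SVote q b \<in> S0 \<union> O1 \<union> O2 \<union> O3 \<union> O4 \<union> O5 \<union> O7 \<and>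
                         bview b = cview st7 \<and> b \<noteq> b0))} \<ge> 2*f+1)
      then st' = st7\<lparr>nullified := True\<rparr> \<and> O8 = {SNull p (cview st7)}
      else st' = st7 \<and> O8 = {}) \<and>
     out = O1 \<union> O2 \<union> O3 \<union> O4 \<union> O5 \<union> O7 \<union> O8)"

definition S_start :: "(nat \<Rightarrow> ('tx,'h) smsg set) \<Rightarrow> (nat \<Rightarrow> ('tx,'h) smsg set) \<Rightarrow> nat \<Rightarrow> ('tx,'h) smsg set" where
  "S_start A out t = (\<Union>t'\<le>t. A t') \<union> (\<Union>t'<t. out t')"

definition S_end :: "(nat \<Rightarrow> ('tx,'h) smsg set) \<Rightarrow> (nat \<Rightarrow> ('tx,'h) smsg set) \<Rightarrow> nat \<Rightarrow> ('tx,'h) smsg set" where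
  "S_end A out t = S_start A out t \<union> out t"

text \<open>An execution as seen by a correct processor p: A t is the finite set of messages
arriving at p at timeslot t (chosen by the adversary/environment/network); messages
signed by p arrive only after p sent them (unforgeability); st t is p's state at the
end of timeslot t and out t the set of messages p sends (to all) at timeslot t.\<close>
definition correct_exec ::
  "nat \<Rightarrow> nat \<Rightarrow> nat \<Rightarrow> (('tx,'h) block \<Rightarrow> 'h) \<Rightarrow> nat
   \<Rightarrow> (nat \<Rightarrow> ('tx,'h) smsg set) \<Rightarrow> (nat \<Rightarrow> ('tx,'h) pstate) \<Rightarrow> (nat \<Rightarrow> ('tx,'h) smsg set) \<Rightarrow> bool" where
  "correct_exec n f Delta H p A st out \<longleftrightarrow>
     (\<forall>t. finite (A t)) \<and>
     (\<forall>t m. m \<in> A t \<and> signed_by n p m \<longrightarrow> (\<exists>t'<t. m \<in> out t')) \<and>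
     (\<forall>t. proto_step n f Delta H p t
            (if t = 0 then {} else S_end A out (t - 1)) (S_start A out t)
            (if t = 0 then init_state else st (t - 1)) (st t) (out t))"

end

theory Submission
  imports Defs
begin

lemma step_lemma:
  fixes st st' :: "('tx,'h) pstate"
  assumes ps: "proto_step n f Delta H p t Sprev S0 st st' out"
  and I1: "\<forall>b. SVote p b \<in> S0 \<longrightarrow> bview b < cview st \<or> (bview b = cview st \<and> notarized st = Some b)"
  and I2: "\<forall>b c. SVote p b \<in> S0 \<longrightarrow> SVote p c \<in> S0 \<longrightarrow> bview b = bview c \<longrightarrow> b = c"
  shows "(\<forall>b. SVote p b \<in> S0 \<union> out \<longrightarrow> bview b < cview st' \<or> (bview b = cview st' \<and> notarized st' = Some b))
    \<and> (\<forall>b c. SVote p b \<in> S0 \<union> out \<longrightarrow> SVote p c \<in> S0 \<union> out \<longrightarrow> bview b = bview c \<longrightarrow> b = c)"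
proof -
  obtain O1 O2 O3 O4 O5 O7 O8 st4 st5 st6 st7 where
     c1: "(\<exists>NF. O1 = \<Union>{NF w |w. has_null n f S0 w \<and> \<not> has_null n f Sprev w} \<and>
        (\<forall>w. has_null n f S0 w \<and> \<not> has_null n f Sprev w \<longrightarrow> is_nullification n f S0 w (NF w)))" and
     c2: "(\<exists>NM NL. O2 = \<Union>{NM b |b. has_Mnot n f S0 b \<and> \<not> has_Mnot n f Sprev b}
                 \<union> \<Union>{NL b |b. has_Lnot n f S0 b \<and> \<not> has_Lnot n f Sprev b} \<and>
        (\<forall>b. has_Mnot n f S0 b \<and> \<not> has_Mnot n f Sprev b \<longrightarrow> is_notarization n (2*f+1) S0 b (NM b)) \<and>
        (\<forall>b. has_Lnot n f S0 b \<and> \<not> has_Lnot n f Sprev b \<longrightarrow> is_notarization n (n-f) S0 b (NL b)))" and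
     c3: "(if p = lead n (cview st)
      then (\<exists>par. select_parent n f (S0 \<union> O1 \<union> O2) (cview st) par \<and>
                  propose_child H (S0 \<union> O1 \<union> O2) par (cview st) O3)
      else O3 = {})" and
     c4: "(if (\<exists>b. valid_proposal n f H (S0 \<union> O1 \<union> O2 \<union> O3) (cview st) b)
          \<and> notarized st = None \<and> \<not> nullified st
      then (\<exists>b. valid_proposal n f H (S0 \<union> O1 \<union> O2 \<union> O3) (cview st) b \<and>
                st4 = st\<lparr>notarized := Some b\<rparr> \<and> O4 = {SVote p b})
      else st4 = st \<and> O4 = {})" and
     c5: "(if t = tentry st4 + 2*Delta \<and> \<not> nullified st4 \<and> notarized st4 = None
      then st5 = st4\<lparr>nullified := True\<rparr> \<and> O5 = {SNull p (cview st4)}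
      else st5 = st4 \<and> O5 = {})" and
     c6: "(if has_null n f (S0 \<union> O1 \<union> O2 \<union> O3 \<union> O4 \<union> O5) (cview st5)
      then st6 = \<lparr>cview = cview st5 + 1, tentry = t, nullified = False, notarized = None\<rparr>
      else st6 = st5)" and
     c7: "(if (\<exists>b. has_Mnot n f (S0 \<union> O1 \<union> O2 \<union> O3 \<union> O4 \<union> O5) b \<and> bview b = cview st6)
      then (\<exists>b. has_Mnot n f (S0 \<union> O1 \<union> O2 \<union> O3 \<union> O4 \<union> O5) b \<and> bview b = cview st6 \<and>
               O7 = (if notarized st6 = None \<and> \<not> nullified st6 then {SVote p b} else {}) \<and>
               st7 = \<lparr>cview = cview st6 + 1, tentry = t, nullified = False, notarized = None\<rparr>)
      else st7 = st6 \<and> O7 = {})" and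
     c8: "(if (\<exists>b0. \<not> nullified st7 \<and> notarized st7 = Some b0 \<and>
            card {q. q < n \<and> (SNull q (cview st7) \<in> S0 \<union> O1 \<union> O2 \<union> O3 \<union> O4 \<union> O5 \<union> O7 \<or>
                    (\<exists>b. SVote q b \<in> S0 \<union> O1 \<union> O2 \<union> O3 \<union> O4 \<union> O5 \<union> O7 \<and>
                         bview b = cview st7 \<and> b \<noteq> b0))} \<ge> 2*f+1)
      then st' = st7\<lparr>nullified := True\<rparr> \<and> O8 = {SNull p (cview st7)}
      else st' = st7 \<and> O8 = {})" and
     cout: "out = O1 \<union> O2 \<union> O3 \<union> O4 \<union> O5 \<union> O7 \<union> O8"
    using ps unfolding proto_step_def by blast
  define P where "P = (\<lambda>(s::('tx,'h) pstate) b. bview b < cview s \<or> (bview b = cview s \<and> notarized s = Some b))"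
  have o1: "SVote q b \<notin> O1" for q b
    using c1 by (auto simp: is_nullification_def)
  have o2: "SVote q b \<in> O2 \<Longrightarrow> SVote q b \<in> S0" for q b
  proof -
    assume a: "SVote q b \<in> O2"
    from c2 obtain NM NL where e: "O2 = \<Union>{NM b |b. has_Mnot n f S0 b \<and> \<not> has_Mnot n f Sprev b}
                 \<union> \<Union>{NL b |b. has_Lnot n f S0 b \<and> \<not> has_Lnot n f Sprev b}" and
        m: "\<forall>b. has_Mnot n f S0 b \<and> \<not> has_Mnot n f Sprev b \<longrightarrow> is_notarization n (2*f+1) S0 b (NM b)" and
        l: "\<forall>b. has_Lnot n f S0 b \<and> \<not> has_Lnot n f Sprev b \<longrightarrow> is_notarization n (n-f) S0 b (NL b)"
      by blast
    have nz: "is_notarization n k S0 c N \<Longrightarrow> SVote q b \<in> N \<Longrightarrow> SVote q b \<in> S0" for k c N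
      unfolding is_notarization_def voters_def by blast
    from a e have "SVote q b \<in> \<Union>{NM b |b. has_Mnot n f S0 b \<and> \<not> has_Mnot n f Sprev b}
       \<or> SVote q b \<in> \<Union>{NL b |b. has_Lnot n f S0 b \<and> \<not> has_Lnot n f Sprev b}" by simp
    then show ?thesis
    proof
      assume "SVote q b \<in> \<Union>{NM b |b. has_Mnot n f S0 b \<and> \<not> has_Mnot n f Sprev b}"
      then obtain c where "SVote q b \<in> NM c" "has_Mnot n f S0 c \<and> \<not> has_Mnot n f Sprev c" by auto
      then have "is_notarization n (2*f+1) S0 c (NM c)" and "SVote q b \<in> NM c" using m by auto
      then show ?thesis by (rule nz)
    next
      assume "SVote q b \<in> \<Union>{NL b |b. has_Lnot n f S0 b \<and> \<not> has_Lnot n f Sprev b}"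
      then obtain c where "SVote q b \<in> NL c" "has_Lnot n f S0 c \<and> \<not> has_Lnot n f Sprev c" by auto
      then have "is_notarization n (n-f) S0 c (NL c)" and "SVote q b \<in> NL c" using l by auto
      then show ?thesis by (rule nz)
    qed
  qed
  have o3: "SVote q b \<notin> O3" for q b
    using c3 by (auto simp: propose_child_def split: if_splits)
  have o5: "SVote q b \<notin> O5" for q b
    using c5 by (auto split: if_splits)
  have o8: "SVote q b \<notin> O8" for q b
    using c8 by (auto split: if_splits)
  define W4 where "W4 = {b. SVote p b \<in> S0 \<union> O4}"
  have s4: "(\<forall>b\<in>W4. P st4 b) \<and> (\<forall>b\<in>W4. \<forall>c\<in>W4. bview b = bview c \<longrightarrow> b = c)"
  proof (cases "(\<exists>b. valid_proposal n f H (S0 \<union> O1 \<union> O2 \<union> O3) (cview st) b)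
          \<and> notarized st = None \<and> \<not> nullified st")
    case True
    from c4 have "\<exists>b. valid_proposal n f H (S0 \<union> O1 \<union> O2 \<union> O3) (cview st) b \<and>
                st4 = st\<lparr>notarized := Some b\<rparr> \<and> O4 = {SVote p b}"
      unfolding if_P[OF True] .
    then obtain b4 where vp: "valid_proposal n f H (S0 \<union> O1 \<union> O2 \<union> O3) (cview st) b4"
      and e4: "st4 = st\<lparr>notarized := Some b4\<rparr>" and e4o: "O4 = {SVote p b4}"
      by blast
    have "b4 \<in> {c \<in> blocks_in (S0 \<union> O1 \<union> O2 \<union> O3). bview c = cview st}"
      using vp unfolding valid_proposal_def by blast
    then have bv: "bview b4 = cview st" by blast
    have nn: "notarized st = None" using True by blast
    have old: "bview b < cview st" if "SVote p b \<in> S0" for b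
      using I1 that nn by auto
    have w: "W4 = insert b4 {b. SVote p b \<in> S0}" unfolding W4_def e4o by blast
    have c4a: "cview st4 = cview st" "notarized st4 = Some b4" unfolding e4 by simp_all
    show ?thesis
    proof
      show "\<forall>b\<in>W4. P st4 b" unfolding w P_def c4a using bv old by auto
      show "\<forall>b\<in>W4. \<forall>c\<in>W4. bview b = bview c \<longrightarrow> b = c"
        unfolding w using bv old I2 by (metis insert_iff mem_Collect_eq less_irrefl)
    qed
  next
    case False
    from c4 have "st4 = st \<and> O4 = {}" unfolding if_not_P[OF False] .
    then have "st4 = st" "W4 = {b. SVote p b \<in> S0}" unfolding W4_def by auto
    then show ?thesis unfolding P_def using I1 I2 by auto
  qed
  have s5: "cview st5 = cview st4 \<and> notarized st5 = notarized st4"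
    using c5 by (auto split: if_splits)
  have s6: "P st5 b \<Longrightarrow> P st6 b" for b
    using c6 unfolding P_def by (auto split: if_splits)
  have s6n: "P st4 b \<Longrightarrow> P st6 b" for b using s5 s6 unfolding P_def by auto
  define W7 where "W7 = {b. SVote p b \<in> S0 \<union> O4 \<union> O7}"
  have s7: "(\<forall>b\<in>W7. P st7 b) \<and> (\<forall>b\<in>W7. \<forall>c\<in>W7. bview b = bview c \<longrightarrow> b = c)"
  proof (cases "(\<exists>b. has_Mnot n f (S0 \<union> O1 \<union> O2 \<union> O3 \<union> O4 \<union> O5) b \<and> bview b = cview st6)")
    case True
    from c7 have "\<exists>b. has_Mnot n f (S0 \<union> O1 \<union> O2 \<union> O3 \<union> O4 \<union> O5) b \<and> bview b = cview st6 \<and>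
               O7 = (if notarized st6 = None \<and> \<not> nullified st6 then {SVote p b} else {}) \<and>
               st7 = \<lparr>cview = cview st6 + 1, tentry = t, nullified = False, notarized = None\<rparr>"
      unfolding if_P[OF True] .
    then obtain b7 where bv: "bview b7 = cview st6" and
       e7o: "O7 = (if notarized st6 = None \<and> \<not> nullified st6 then {SVote p b7} else {})" and
       e7: "st7 = \<lparr>cview = cview st6 + 1, tentry = t, nullified = False, notarized = None\<rparr>"
      by blast
    have c7a: "cview st7 = cview st6 + 1" "notarized st7 = None" unfolding e7 by simp_all
    have w4: "P st6 b" if "b \<in> W4" for b using s4 s6n that by blast
    show ?thesis
    proof (cases "notarized st6 = None \<and> \<not> nullified st6")
      case True2: True
      have lt: "bview b < cview st6" if "b \<in> W4" for b using w4[OF that] True2 unfolding P_def by auto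
      have "O7 = {SVote p b7}" unfolding e7o using True2 by simp
      then have w: "W7 = insert b7 W4" unfolding W7_def W4_def by blast
      show ?thesis
      proof
        show "\<forall>b\<in>W7. P st7 b" unfolding w P_def c7a using lt bv by (auto dest!: lt)
        show "\<forall>b\<in>W7. \<forall>c\<in>W7. bview b = bview c \<longrightarrow> b = c"
          unfolding w using lt bv s4 by (metis insert_iff less_irrefl)
      qed
    next
      case False2: False
      have "O7 = {}" unfolding e7o using False2 by simp
      then have w: "W7 = W4" unfolding W7_def W4_def by blast
      have le: "bview b \<le> cview st6" if "b \<in> W4" for b using w4[OF that] unfolding P_def by auto
      show ?thesis
      proof
        show "\<forall>b\<in>W7. P st7 b" unfolding w P_def c7a using le by fastforce
        show "\<forall>b\<in>W7. \<forall>c\<in>W7. bview b = bview c \<longrightarrow> b = c"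
          unfolding w using s4 by blast
      qed
    qed
  next
    case False
    from c7 have "st7 = st6 \<and> O7 = {}" unfolding if_not_P[OF False] .
    then have "st7 = st6" "W7 = W4" unfolding W7_def W4_def by auto
    then show ?thesis using s4 s6n by auto
  qed
  have s8: "P st7 b \<Longrightarrow> P st' b" for b
    using c8 unfolding P_def by (auto split: if_splits)
  have votes: "SVote p b \<in> S0 \<union> out \<Longrightarrow> b \<in> W7" for b
    unfolding W7_def cout using o1 o2 o3 o5 o8 by blast
  show ?thesis using votes s7 s8 unfolding P_def by blast
qed

theorem lemma1:
  fixes n f Delta :: nat and H :: "('tx,'h) block \<Rightarrow> 'h" and p v :: nat
    and A :: "nat \<Rightarrow> ('tx,'h) smsg set" and st :: "nat \<Rightarrow> ('tx,'h) pstate"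
    and out :: "nat \<Rightarrow> ('tx,'h) smsg set"
  assumes "5*f + 1 \<le> n" and "p < n"
    and "correct_exec n f Delta H p A st out"
    and "v \<ge> 1"
    and "bview b1 = v" and "\<exists>t. SVote p b1 \<in> out t"
    and "bview b2 = v" and "\<exists>t. SVote p b2 \<in> out t"
  shows "b1 = b2"
proof -
  note ce = assms(3)[unfolded correct_exec_def]
  define pre where "pre = (\<lambda>t. if t = 0 then init_state else st (t - 1))"
  define V where "V = (\<lambda>t. {b. \<exists>t'<t. SVote p b \<in> out t'})"
  have sS: "SVote p b \<in> S_start A out t \<longleftrightarrow> b \<in> V t" for b t
  proof
    assume "SVote p b \<in> S_start A out t"
    then show "b \<in> V t"
    proof (unfold S_start_def, elim UnE)
      assume "SVote p b \<in> (\<Union>t'\<le>t. A t')"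
      then obtain t' where "t' \<le> t" "SVote p b \<in> A t'" by auto
      moreover have "signed_by n p (SVote p b)" by (simp add: signed_by_def)
      ultimately obtain t'' where "t'' < t'" "SVote p b \<in> out t''" using ce by blast
      moreover have "t'' < t" using \<open>t'' < t'\<close> \<open>t' \<le> t\<close> by simp
      ultimately show ?thesis unfolding V_def by blast
    next
      assume "SVote p b \<in> (\<Union>t'<t. out t')"
      then show ?thesis unfolding V_def by auto
    qed
  next
    assume "b \<in> V t" then show "SVote p b \<in> S_start A out t"
      unfolding V_def S_start_def by auto
  qed
  have sE: "SVote p b \<in> S_start A out t \<union> out t \<longleftrightarrow> b \<in> V (Suc t)" for b t
    using sS[of b t] unfolding V_def by (auto simp: less_Suc_eq)
  have J: "(\<forall>b\<in>V t. bview b < cview (pre t) \<or> (bview b = cview (pre t) \<and> notarized (pre t) = Some b))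
     \<and> (\<forall>b\<in>V t. \<forall>c\<in>V t. bview b = bview c \<longrightarrow> b = c)" for t
  proof (induction t)
    case 0
    then show ?case unfolding V_def by auto
  next
    case (Suc t)
    have ps: "proto_step n f Delta H p t
            (if t = 0 then {} else S_end A out (t - 1)) (S_start A out t)
            (pre t) (st t) (out t)" using ce unfolding pre_def by auto
    have "(\<forall>b. SVote p b \<in> S_start A out t \<union> out t \<longrightarrow> bview b < cview (st t) \<or> (bview b = cview (st t) \<and> notarized (st t) = Some b))
    \<and> (\<forall>b c. SVote p b \<in> S_start A out t \<union> out t \<longrightarrow> SVote p c \<in> S_start A out t \<union> out t \<longrightarrow> bview b = bview c \<longrightarrow> b = c)"
      by (rule step_lemma[OF ps]) (use Suc sS in auto)
    moreover have "SVote p b \<in> S_start A out t \<union> out t" if "b \<in> V (Suc t)" for b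
      using sE that by blast
    moreover have "pre (Suc t) = st t" unfolding pre_def by simp
    ultimately show ?case by metis
  qed
  obtain t1 where t1: "SVote p b1 \<in> out t1" using assms(6) by auto
  obtain t2 where t2: "SVote p b2 \<in> out t2" using assms(8) by auto
  have "t1 < Suc (max t1 t2)" "t2 < Suc (max t1 t2)" by auto
  then have "b1 \<in> V (Suc (max t1 t2))" "b2 \<in> V (Suc (max t1 t2))"
    unfolding V_def using t1 t2 by blast+
  then show ?thesis using J[of "Suc (max t1 t2)"] assms(5,7) by auto
qed

end
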